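(* Let $\Phi \in \mathbb{R}^{m\times n}$, let $x_0\in\mathbb{R}^n$ be nonzero with support $I\eqdef\{i: x_{0,i}\neq 0\}$, and assume $x_0$ is identifiable, i.e. $x_0$ is a solution of $\min_x\|x\|_1$ subject to $\Phi x=\Phi x_0$. Let $p_1 \in \operatorname{Argmin}_{p\in\mathcal{D}_{x_0}}\|p\|_1$, where $$\mathcal{D}_{x_0} \eqdef \{ p \in \mathbb{R}^m : \Phi_{\cdot,I}^* p = \operatorname{sign}(x_{0,I}),\ \|\Phi^* p\|_\infty \le 1\},$$ let $J \eqdef \{ i : |(\Phi^* p_1)_i| = 1\}$, $S \eqdef \operatorname{supp}(p_1) = \{ j : p_{1,j}\neq 0\}$, $s_J \eqdef \Phi_{\cdot,J}^* p_1 \in\{-1,1\}^{|J|}$ and $q_S \eqdef \operatorname{sign}(p_{1,S}) \in \{-1,1\}^{|S|}$. Assume that $\Phi_{S,J}$ has full rank and that $$s_J \notin \operatorname{Im}(\Phi_{S',J}^* ) \ \ \text{for all } S'\subseteq\{1,\dots,m\} \text{ with } |S'|<|J|, \qquad q_S\notin\operatorname{Im}(\Phi_{S,J'}) \ \ \text{for all } J'\subseteq\{1,\dots,n\} \text{ with } |J'|<|S|.$$ Then $|S|=|J|$ and $\Phi_{S,J}$ is invertible. Consequently, with $T_1 \eqdef \{u\in\mathbb{R}^m : \operatorname{supp}(u)\subseteq S\}$, one has $P_{T_1}\Phi_{\cdot,J} = \mathrm{Id}_{\cdot,S}\Phi_{S,J}$ and $\operatorname{Ker}(P_{T_1}\Phi_{\cdot,J})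 = \{0\}$.
   Context: $\operatorname{sign}$ acts entrywise. $\Phi_{S,J}$ denotes the submatrix of $\Phi$ with rows in $S$ and columns in $J$, a dot meaning all rows/columns are kept, and $\Phi_{S,J}^*\eqdef(\Phi_{S,J})^*$. $\mathrm{Id}_{\cdot,S}$ is the submatrix of the $m\times m$ identity with columns in $S$. $P_V$ is the orthogonal projector onto a subspace $V$; $T_1$ is the orthogonal complement of the subspace parallel to $\partial\|p_1\|_\infty$... more precisely, $T_1=\mathrm{par}(\partial\|p_1\|_1)^\perp$, which equals the set of vectors supported in $S$. *)

theory Defs
  imports "Jordan_Normal_Form.DL_Rank_Submatrix" "Jordan_Normal_Form.Matrix_Kernel"
begin

(* Vectors in R^k are "real vec" of dimension k, matrices in R^{m x n} are
   "real mat" in carrier_mat m n; indices are 0-based. *)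

definition l1_norm :: "real vec \<Rightarrow> real" where
  "l1_norm v = (\<Sum>i<dim_vec v. \<bar>v $ i\<bar>)"

definition supp_vec :: "real vec \<Rightarrow> nat set" where
  "supp_vec v = {i. i < dim_vec v \<and> v $ i \<noteq> 0}"

(* sub-vector v_J, indices of J taken in increasing order (same convention as submatrix) *)
definition subvec :: "real vec \<Rightarrow> nat set \<Rightarrow> real vec" where
  "subvec v J = vec (card {i. i < dim_vec v \<and> i \<in> J}) (\<lambda>k. v $ pick J k)"

definition identifiable :: "real mat \<Rightarrow> real vec \<Rightarrow> bool" where
  "identifiable Phi x0 \<longleftrightarrow>
     (\<forall>x \<in> carrier_vec (dim_col Phi). Phi *\<^sub>v x = Phi *\<^sub>v x0 \<longrightarrow> l1_norm x0 \<le> l1_norm x)"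

definition dual_set :: "real mat \<Rightarrow> real vec \<Rightarrow> real vec set" where
  "dual_set Phi x0 = {p \<in> carrier_vec (dim_row Phi).
      subvec (transpose_mat Phi *\<^sub>v p) (supp_vec x0) = map_vec sgn (subvec x0 (supp_vec x0))
    \<and> (\<forall>i < dim_col Phi. \<bar>(transpose_mat Phi *\<^sub>v p) $ i\<bar> \<le> 1)}"

definition mat_image :: "real mat \<Rightarrow> real vec set" where
  "mat_image A = {A *\<^sub>v v | v. v \<in> carrier_vec (dim_col A)}"

definition full_rank :: "real mat \<Rightarrow> bool" where
  "full_rank A \<longleftrightarrow> vec_space.rank (dim_row A) A = min (dim_row A) (dim_col A)"

(* orthogonal projector onto T = {u in R^m : supp u \<subseteq> S}: the coordinate projector *)
definition coord_proj :: "nat \<Rightarrow> nat set \<Rightarrow> real mat" where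
  "coord_proj m S = mat m m (\<lambda>(i,j). if i = j \<and> i \<in> S then 1 else 0)"

end

theory Submission imports Defs begin

lemma pick_bij:
  assumes "finite S" shows "bij_betw (pick S) {..<card S} S"
proof -
  have inj: "inj_on (pick S) {..<card S}"
    by (rule inj_onI) (metis lessThan_iff linorder_neqE_nat pick_mono nat_neq_iff)
  have sub: "pick S ` {..<card S} \<subseteq> S" using pick_in_set by auto
  have "card (pick S ` {..<card S}) = card S" using card_image[OF inj] by simp
  then have "pick S ` {..<card S} = S" using card_subset_eq[OF assms sub] by simp
  then show ?thesis using inj bij_betw_def by blast
qed

lemma sum_pick:
  assumes "finite S" shows "(\<Sum>l<card S. f (pick S l)) = (\<Sum>x\<in>S. f x)"
  using sum.reindex_bij_betw[OF pick_bij[OF assms], of f] by simp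

lemma card_idx_less: fixes S :: "nat set" assumes "finite S" "i \<in> S" shows "card {a\<in>S. a < i} < card S"
proof -
  have "{a\<in>S. a < i} \<subseteq> S" "i \<notin> {a\<in>S. a < i}" by auto
  then have "{a\<in>S. a < i} \<subset> S" using assms(2) by blast
  then show ?thesis using assms(1) psubset_card_mono by blast
qed

lemma card_lt_sub: assumes "S \<subseteq> {..<m}" shows "{i. i < m \<and> i \<in> S} = S"
  using assms by auto

lemma transp_mult_index:
  assumes "Phi \<in> carrier_mat m n" "v \<in> carrier_vec m" "j < n"
  shows "(transpose_mat Phi *\<^sub>v v) $ j = (\<Sum>i<m. Phi $$ (i,j) * v $ i)"
  using assms by (auto simp: scalar_prod_def atLeast0LessThan intro!: sum.cong)

lemma (in vec_space) rank_inj: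
  assumes A: "A \<in> carrier_mat n r" and rk: "rank A = r"
    and v: "v \<in> carrier_vec r" and Av: "A *\<^sub>v v = 0\<^sub>v n"
  shows "v = 0\<^sub>v r"
proof (rule ccontr)
  assume nz: "v \<noteq> 0\<^sub>v r"
  show False
  proof (cases "distinct (cols A)")
    case True
    then have "lin_indpt (set (cols A))"
      using full_rank_lin_indpt[OF A rk] by auto
    then show False using lin_depI[OF A v nz Av True] by blast
  next
    case False
    obtain S where S: "maximal S (\<lambda>T. T \<subseteq> set (cols A) \<and> lin_indpt T)"
      using maximal_exists[of "(\<lambda>T. T \<subseteq> set (cols A) \<and> lin_indpt T)" "card (set (cols A))" "{}"]
      by (meson List.finite_set card_mono empty_iff empty_subsetI finite_lin_indpt2 rev_finite_subset)
    then have "card S \<le> card (set (cols A))" by (simp add: card_mono maximal_def)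
    moreover have "card (set (cols A)) < r"
      using False A card_distinct[of "cols A"] card_length[of "cols A"] by (metis cols_length carrier_matD(2) le_neq_implies_less)
    ultimately show False using rank_card_indpt[OF A S] rk by simp
  qed
qed

lemma E_carrier: assumes "S \<subseteq> {..<m}" shows "submatrix (1\<^sub>m m) UNIV S \<in> carrier_mat m (card S)"
  using assms by (auto simp: dim_submatrix card_lt_sub)

lemma E_index: assumes "S \<subseteq> {..<m}" "i < m" "l < card S"
  shows "submatrix (1\<^sub>m m) UNIV S $$ (i,l) = (if i = pick S l then 1 else 0)"
proof -
  have fin: "finite S" using assms(1) finite_subset by blast
  have "pick S l \<in> S" using pick_in_set assms(3) by blast
  then have "pick S l < m" using assms(1) by auto
  then show ?thesis using assms submatrix_index[of i "1\<^sub>m m" UNIV l S]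
    by (simp add: card_lt_sub pick_UNIV)
qed

lemma E_mult: fixes u :: "real vec" assumes Sm: "S \<subseteq> {..<m}" and u: "u \<in> carrier_vec (card S)" and i: "i < m"
  shows "(submatrix (1\<^sub>m m) UNIV S *\<^sub>v u) $ i = (if i \<in> S then u $ card {a\<in>S. a<i} else 0)"
proof -
  have fin: "finite S" using Sm finite_subset by blast
  have "(submatrix (1\<^sub>m m) UNIV S *\<^sub>v u) $ i = row (submatrix (1\<^sub>m m) UNIV S) i \<bullet> u"
    using E_carrier[OF Sm] i by (metis index_mult_mat_vec carrier_matD(1))
  also have "\<dots> = (\<Sum>l<card S. submatrix (1\<^sub>m m) UNIV S $$ (i,l) * u $ l)"
    proof -
    have dv: "dim_vec u = card S" using u by auto
    have dc: "dim_col (submatrix (1\<^sub>m m) UNIV S) = card S" "dim_row (submatrix (1\<^sub>m m) UNIV S) = m"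
      using carrier_matD[OF E_carrier[OF Sm]] by auto
    show ?thesis unfolding scalar_prod_def dv atLeast0LessThan
      by (intro sum.cong refl) (metis dc index_row(1) i lessThan_iff)
  qed
  also have "\<dots> = (\<Sum>l<card S. (\<lambda>x. if i = x then u $ card {a\<in>S. a<x} else 0) (pick S l))"
  proof (intro sum.cong refl)
    fix l assume "l \<in> {..<card S}"
    then have l: "l < card S" by simp
    have cp: "card {a\<in>S. a < pick S l} = l" using card_pick l by blast
    show "submatrix (1\<^sub>m m) UNIV S $$ (i,l) * u $ l
       = (\<lambda>x. if i = x then u $ card {a\<in>S. a<x} else 0) (pick S l)"
      unfolding E_index[OF Sm i l] using cp by simp
  qed
  also have "\<dots> = (\<Sum>x\<in>S. if i = x then u $ card {a\<in>S. a<x} else 0)"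
    by (rule sum_pick[OF fin])
  also have "\<dots> = (if i \<in> S then u $ card {a\<in>S. a<i} else 0)"
    using fin by (simp add: sum.delta)
  finally show ?thesis .
qed

lemma sum_E: fixes u :: "real vec" assumes Sm: "S \<subseteq> {..<m}" and u: "u \<in> carrier_vec (card S)"
  shows "(\<Sum>i<m. g i * (submatrix (1\<^sub>m m) UNIV S *\<^sub>v u) $ i) = (\<Sum>l<card S. g (pick S l) * u $ l)"
proof -
  have fin: "finite S" using Sm finite_subset by blast
  have "(\<Sum>i<m. g i * (submatrix (1\<^sub>m m) UNIV S *\<^sub>v u) $ i)
      = (\<Sum>i<m. if i \<in> S then g i * u $ card {a\<in>S. a<i} else 0)"
    using E_mult[OF Sm u] by (intro sum.cong) auto
  also have "\<dots> = (\<Sum>i\<in>{..<m} \<inter> S. g i * u $ card {a\<in>S. a<i})"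
    by (simp add: sum.inter_restrict)
  also have "{..<m} \<inter> S = S" using Sm by auto
  also have "(\<Sum>i\<in>S. g i * u $ card {a\<in>S. a<i}) = (\<Sum>l<card S. g (pick S l) * u $ card {a\<in>S. a<pick S l})"
    by (rule sum_pick[OF fin, symmetric])
  also have "\<dots> = (\<Sum>l<card S. g (pick S l) * u $ l)"
    using card_pick by (intro sum.cong) auto
  finally show ?thesis .
qed

lemma self_scalar_zero: fixes v :: "real vec"
  assumes "v \<in> carrier_vec k" "v \<bullet> v = 0" shows "v = 0\<^sub>v k"
proof -
  have "(\<Sum>i\<in>{0..<k}. v $ i * v $ i) = 0" using assms by (simp add: scalar_prod_def)
  then have "\<forall>i\<in>{0..<k}. v $ i * v $ i = 0"
    by (subst sum_nonneg_eq_0_iff[symmetric]) auto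
  then show ?thesis using assms(1) by (intro eq_vecI) auto
qed

lemma self_scalar_pos: fixes v :: "real vec"
  assumes "v \<in> carrier_vec k" "v \<noteq> 0\<^sub>v k" shows "v \<bullet> v > 0"
proof -
  have "v \<bullet> v \<ge> 0" using assms by (simp add: scalar_prod_def sum_nonneg)
  moreover have "v \<bullet> v \<noteq> 0" using self_scalar_zero assms by blast
  ultimately show ?thesis by simp
qed

lemma ev_small: fixes a b :: real assumes "0 < b"
  shows "\<forall>\<^sub>F t in at_right 0. t * a < b"
proof -
  have "((\<lambda>t. t * a) \<longlongrightarrow> 0 * a) (at_right 0)"
    by (intro tendsto_intros)
  then show ?thesis using assms order_tendstoD(2) by fastforce
qed

lemma abs_pert: fixes a x :: real assumes "\<bar>x\<bar> < \<bar>a\<bar>"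
  shows "\<bar>a - x\<bar> = \<bar>a\<bar> - sgn a * x"
proof (cases "a > 0")
  case True
  then have "sgn a = 1" "\<bar>a\<bar> = a" by auto
  moreover have "a - x > 0" using assms True by linarith
  ultimately show ?thesis by simp
next
  case False
  then have "a < 0" using assms by (cases "a = 0") auto
  then have "sgn a = -1" "\<bar>a\<bar> = -a" by auto
  moreover have "a - x < 0" using assms \<open>a < 0\<close> by linarith
  ultimately show ?thesis by simp
qed


lemma P_mult: fixes v :: "real vec" assumes v: "v \<in> carrier_vec m" and i: "i < m"
  shows "(coord_proj m S *\<^sub>v v) $ i = (if i \<in> S then v $ i else 0)"
proof -
  have "(coord_proj m S *\<^sub>v v) $ i = (\<Sum>a\<in>{0..<m}. (if i = a \<and> i \<in> S then 1 else 0) * v $ a)"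
    using v i by (simp add: coord_proj_def scalar_prod_def row_def)
  also have "\<dots> = (if i \<in> S then v $ i else 0)"
  proof (cases "i \<in> S")
    case True
    then have "(\<Sum>a\<in>{0..<m}. (if i = a \<and> i \<in> S then 1 else 0) * v $ a) = (\<Sum>a\<in>{0..<m}. if i = a then v $ a else 0)"
      by (intro sum.cong) auto
    also have "\<dots> = v $ i" using i by (simp add: sum.delta)
    finally show ?thesis using True by simp
  qed simp
  finally show ?thesis .
qed

theorem lemma2:
  fixes Phi :: "real mat" and x0 p1 :: "real vec" and m n :: nat
    and J S :: "nat set" and sJ qS :: "real vec"
  assumes Phi: "Phi \<in> carrier_mat m n"
    and x0: "x0 \<in> carrier_vec n" and x0_nz: "x0 \<noteq> 0\<^sub>v n"
    and ident: "identifiable Phi x0"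
    and p1: "p1 \<in> dual_set Phi x0"
    and p1_min: "\<forall>p \<in> dual_set Phi x0. l1_norm p1 \<le> l1_norm p"
    and J_def: "J = {i. i < n \<and> \<bar>(transpose_mat Phi *\<^sub>v p1) $ i\<bar> = 1}"
    and S_def: "S = supp_vec p1"
    and sJ_def: "sJ = subvec (transpose_mat Phi *\<^sub>v p1) J"
    and qS_def: "qS = map_vec sgn (subvec p1 S)"
    and rank: "full_rank (submatrix Phi S J)"
    and hJ: "\<forall>S'. S' \<subseteq> {..<m} \<and> card S' < card J \<longrightarrow>
               sJ \<notin> mat_image (transpose_mat (submatrix Phi S' J))"
    and hS: "\<forall>J'. J' \<subseteq> {..<n} \<and> card J' < card S \<longrightarrow>
               qS \<notin> mat_image (submatrix Phi S J')"
  shows "card S = card J \<and> invertible_mat (submatrix Phi S J)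
    \<and> coord_proj m S * submatrix Phi UNIV J = submatrix (1\<^sub>m m) UNIV S * submatrix Phi S J
    \<and> mat_kernel (coord_proj m S * submatrix Phi UNIV J) = {0\<^sub>v (card J)}"
proof -
  have dPhi: "dim_row Phi = m" "dim_col Phi = n" using carrier_matD[OF Phi] by auto
  have p1c: "p1 \<in> carrier_vec m" using p1 dPhi by (auto simp: dual_set_def)
  have p1b: "\<forall>i<n. \<bar>(transpose_mat Phi *\<^sub>v p1) $ i\<bar> \<le> 1" using p1 dPhi by (auto simp: dual_set_def)
  have p1e: "subvec (transpose_mat Phi *\<^sub>v p1) (supp_vec x0) = map_vec sgn (subvec x0 (supp_vec x0))"
    using p1 by (auto simp: dual_set_def)
  have Sm: "S \<subseteq> {..<m}" using p1c S_def by (auto simp: supp_vec_def)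
  have finS: "finite S" using Sm finite_subset by blast
  have Jn: "J \<subseteq> {..<n}" using J_def by auto
  have finJ: "finite J" using Jn finite_subset by blast
  have p1z: "\<And>i. i < m \<Longrightarrow> i \<notin> S \<Longrightarrow> p1 $ i = 0" using S_def p1c by (auto simp: supp_vec_def)
  have p1nz: "\<And>i. i \<in> S \<Longrightarrow> p1 $ i \<noteq> 0" using S_def by (auto simp: supp_vec_def)
  define A where "A = submatrix Phi S J"
  have cardS: "card {i. i < m \<and> i \<in> S} = card S" using card_lt_sub[OF Sm] by simp
  have cardJ: "card {j. j < n \<and> j \<in> J} = card J" using card_lt_sub[OF Jn] by simp
  have Ac: "A \<in> carrier_mat (card S) (card J)" unfolding A_def using dPhi cardS cardJ
    by (auto simp: dim_submatrix)
  have dA: "dim_row A = card S" "dim_col A = card J" using carrier_matD[OF Ac] by auto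
  have Aidx: "\<And>k l. k < card S \<Longrightarrow> l < card J \<Longrightarrow> A $$ (k,l) = Phi $$ (pick S k, pick J l)"
    unfolding A_def using submatrix_index[of _ Phi S _ J] dPhi cardS cardJ by auto
  have pickJ: "\<And>k. k < card J \<Longrightarrow> pick J k \<in> J" using pick_in_set by blast
  have pickJn: "\<And>k. k < card J \<Longrightarrow> pick J k < n" using pickJ Jn by auto
  define c where "c = transpose_mat Phi *\<^sub>v p1"
  have cc: "c \<in> carrier_vec n" unfolding c_def carrier_vec_def using dPhi by simp
  define E :: "real mat" where "E = submatrix (1\<^sub>m m) UNIV S"
  have Ec: "E \<in> carrier_mat m (card S)" using E_carrier[OF Sm] E_def by simp
  define w1 where "w1 = subvec p1 S"
  have w1: "w1 = vec (card S) (\<lambda>k. p1 $ pick S k)" unfolding w1_def subvec_def using p1c cardS by auto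
  have w1c: "w1 \<in> carrier_vec (card S)" using w1 by auto
  have p1E: "p1 = E *\<^sub>v w1"
  proof (rule eq_vecI)
    show "dim_vec p1 = dim_vec (E *\<^sub>v w1)" using p1c Ec by auto
    fix i assume "i < dim_vec (E *\<^sub>v w1)"
    then have i: "i < m" using Ec by auto
    have Ew: "(E *\<^sub>v w1) $ i = (if i \<in> S then w1 $ card {a\<in>S. a<i} else 0)"
      unfolding E_def by (rule E_mult[OF Sm w1c i])
    show "p1 $ i = (E *\<^sub>v w1) $ i"
    proof (cases "i \<in> S")
      case True
      have "card {a\<in>S. a<i} < card S" using card_idx_less[OF finS True] .
      then show ?thesis using True pick_card_in_set[OF True] w1 Ew by simp
    next
      case False then show ?thesis using p1z i Ew by simp
    qed
  qed
  have PE: "\<And>u j. u \<in> carrier_vec (card S) \<Longrightarrow> j < n \<Longrightarrow>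
      (transpose_mat Phi *\<^sub>v (E *\<^sub>v u)) $ j = (\<Sum>l<card S. Phi $$ (pick S l, j) * u $ l)"
  proof -
    fix u :: "real vec" and j assume u: "u \<in> carrier_vec (card S)" and j: "j < n"
    have "E *\<^sub>v u \<in> carrier_vec m" using Ec u by auto
    then have "(transpose_mat Phi *\<^sub>v (E *\<^sub>v u)) $ j = (\<Sum>i<m. Phi $$ (i,j) * (E *\<^sub>v u) $ i)"
      using transp_mult_index[OF Phi _ j] by blast
    also have "\<dots> = (\<Sum>l<card S. Phi $$ (pick S l, j) * u $ l)"
      unfolding E_def by (rule sum_E[OF Sm u])
    finally show "(transpose_mat Phi *\<^sub>v (E *\<^sub>v u)) $ j = (\<Sum>l<card S. Phi $$ (pick S l, j) * u $ l)" .
  qed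
  have ATidx: "\<And>u k. u \<in> carrier_vec (card S) \<Longrightarrow> k < card J \<Longrightarrow>
      (transpose_mat A *\<^sub>v u) $ k = (\<Sum>l<card S. Phi $$ (pick S l, pick J k) * u $ l)"
  proof -
    fix u :: "real vec" and k assume u: "u \<in> carrier_vec (card S)" and k: "k < card J"
    have "(transpose_mat A *\<^sub>v u) $ k = (\<Sum>l<card S. A $$ (l,k) * u $ l)"
      using transp_mult_index[OF Ac u k] .
    also have "\<dots> = (\<Sum>l<card S. Phi $$ (pick S l, pick J k) * u $ l)"
      using Aidx k by (intro sum.cong) auto
    finally show "(transpose_mat A *\<^sub>v u) $ k = (\<Sum>l<card S. Phi $$ (pick S l, pick J k) * u $ l)" .
  qed
  have sJ_eq: "sJ = transpose_mat A *\<^sub>v w1"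
  proof (rule eq_vecI)
    have dsJ: "dim_vec sJ = card J" unfolding sJ_def subvec_def using cc c_def cardJ dPhi by simp
    show "dim_vec sJ = dim_vec (transpose_mat A *\<^sub>v w1)" using dsJ dA by simp
    fix k assume "k < dim_vec (transpose_mat A *\<^sub>v w1)"
    then have k: "k < card J" using dA by simp
    have "sJ $ k = c $ pick J k" unfolding sJ_def subvec_def c_def using dsJ k dPhi cardJ
      by (simp add: sJ_def subvec_def)
    also have "\<dots> = (\<Sum>l<card S. Phi $$ (pick S l, pick J k) * w1 $ l)"
      unfolding c_def using PE[OF w1c pickJn[OF k]] p1E by simp
    also have "\<dots> = (transpose_mat A *\<^sub>v w1) $ k" using ATidx[OF w1c k] by simp
    finally show "sJ $ k = (transpose_mat A *\<^sub>v w1) $ k" .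
  qed
  have JleS: "card J \<le> card S"
  proof (rule ccontr)
    assume "\<not> card J \<le> card S"
    then have "card S < card J" by simp
    moreover have "sJ \<in> mat_image (transpose_mat A)"
      unfolding mat_image_def sJ_eq using w1c dA by auto
    ultimately show False using hJ Sm A_def by auto
  qed
  have rkA: "vec_space.rank (card S) A = min (card S) (card J)"
    using rank unfolding full_rank_def A_def[symmetric] dA .
  have X: "supp_vec x0 \<subseteq> J"
  proof
    fix i assume iX: "i \<in> supp_vec x0"
    have Xn: "supp_vec x0 \<subseteq> {..<n}" using x0 by (auto simp: supp_vec_def)
    have finX: "finite (supp_vec x0)" using Xn finite_subset by blast
    have i: "i < n" "x0 $ i \<noteq> 0" using iX x0 by (auto simp: supp_vec_def)
    define k where "k = card {a\<in>supp_vec x0. a<i}"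
    have k: "k < card (supp_vec x0)" using card_idx_less[OF finX iX] k_def by simp
    have pk: "pick (supp_vec x0) k = i" using pick_card_in_set[OF iX] k_def by simp
    have cX: "card {j. j < n \<and> j \<in> supp_vec x0} = card (supp_vec x0)" using card_lt_sub[OF Xn] by simp
    have "subvec c (supp_vec x0) $ k = c $ i" unfolding subvec_def using cc cX k pk by simp
    moreover have "map_vec sgn (subvec x0 (supp_vec x0)) $ k = sgn (x0 $ i)"
      unfolding subvec_def using x0 cX k pk by simp
    ultimately have "c $ i = sgn (x0 $ i)" using p1e c_def by metis
    then have "\<bar>c $ i\<bar> = 1" using i by (cases "x0 $ i > 0") auto
    then show "i \<in> J" using J_def i c_def by simp
  qed
  have SleJ: "card S \<le> card J"
  proof (rule ccontr)
    assume "\<not> card S \<le> card J"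
    then have lt: "card J < card S" by simp
    have rkJ: "vec_space.rank (card S) A = card J" using rkA lt by simp
    have Ainj: "\<And>v. v \<in> carrier_vec (card J) \<Longrightarrow> A *\<^sub>v v = 0\<^sub>v (card S) \<Longrightarrow> v = 0\<^sub>v (card J)"
      using vec_space.rank_inj[OF Ac rkJ] by blast
    have qSc: "qS \<in> carrier_vec (card S)" using qS_def w1c w1_def by simp
    have qSi: "\<And>l. l < card S \<Longrightarrow> qS $ l = sgn (p1 $ pick S l)"
      unfolding qS_def w1_def[symmetric] w1 by simp
    have qnot: "qS \<notin> mat_image A" using hS Jn lt A_def by auto
    define G where "G = transpose_mat A * A"
    have Gc: "G \<in> carrier_mat (card J) (card J)" using Ac G_def by auto
    have GA: "\<And>v. v \<in> carrier_vec (card J) \<Longrightarrow> G *\<^sub>v v = transpose_mat A *\<^sub>v (A *\<^sub>v v)"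
      unfolding G_def using Ac by (metis assoc_mult_mat_vec transpose_carrier_mat)
    have "det G \<noteq> 0"
    proof
      assume "det G = 0"
      then obtain v where v: "v \<in> carrier_vec (card J)" "v \<noteq> 0\<^sub>v (card J)" "G *\<^sub>v v = 0\<^sub>v (card J)"
        using det_0_iff_vec_prod_zero_field[OF Gc] by blast
      have Avc: "A *\<^sub>v v \<in> carrier_vec (card S)" using Ac v by auto
      have "(A *\<^sub>v v) \<bullet> (A *\<^sub>v v) = (transpose_mat A *\<^sub>v (A *\<^sub>v v)) \<bullet> v"
        using transpose_vec_mult_scalar[OF Ac v(1) Avc] by simp
      also have "\<dots> = (G *\<^sub>v v) \<bullet> v" using GA v by simp
      also have "\<dots> = 0" using v by simp
      finally have "A *\<^sub>v v = 0\<^sub>v (card S)" using self_scalar_zero Avc by blast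
      then show False using Ainj v by blast
    qed
    from det_non_zero_imp_unit[OF Gc this, of "()"] obtain Gi where Gi: "Gi \<in> carrier_mat (card J) (card J)" "G * Gi = 1\<^sub>m (card J)"
      unfolding Units_def ring_mat_def by auto
    have AtqS: "transpose_mat A *\<^sub>v qS \<in> carrier_vec (card J)" using Ac qSc by auto
    define w where "w = Gi *\<^sub>v (transpose_mat A *\<^sub>v qS)"
    have wc: "w \<in> carrier_vec (card J)" using Gi AtqS w_def by auto
    define d where "d = qS - A *\<^sub>v w"
    have Awc: "A *\<^sub>v w \<in> carrier_vec (card S)" using Ac wc by auto
    have dc: "d \<in> carrier_vec (card S)" using d_def qSc Awc by auto
    have AtAw: "transpose_mat A *\<^sub>v (A *\<^sub>v w) = transpose_mat A *\<^sub>v qS"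
    proof -
      have "transpose_mat A *\<^sub>v (A *\<^sub>v w) = G *\<^sub>v w" using GA wc by simp
      also have "\<dots> = (G * Gi) *\<^sub>v (transpose_mat A *\<^sub>v qS)" unfolding w_def
        using Gc Gi(1) AtqS by (metis assoc_mult_mat_vec)
      also have "\<dots> = transpose_mat A *\<^sub>v qS" using Gi AtqS by simp
      finally show ?thesis .
    qed
    have Atd: "transpose_mat A *\<^sub>v d = 0\<^sub>v (card J)"
    proof -
      have "transpose_mat A *\<^sub>v d = transpose_mat A *\<^sub>v qS - transpose_mat A *\<^sub>v (A *\<^sub>v w)"
        unfolding d_def by (rule mult_minus_distrib_mat_vec) (use Ac qSc Awc in auto)
      also have "\<dots> = 0\<^sub>v (card J)" unfolding AtAw using AtqS by (intro eq_vecI) auto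
      finally show ?thesis .
    qed
    have qSd: "qS = d + A *\<^sub>v w" unfolding d_def using qSc Awc dA by (intro eq_vecI) auto
    have dnz: "d \<noteq> 0\<^sub>v (card S)"
    proof
      assume d0: "d = 0\<^sub>v (card S)"
      have "qS = A *\<^sub>v w" using qSd d0 Awc by simp
      then have "qS \<in> mat_image A" unfolding mat_image_def using wc dA by auto
      then show False using qnot by simp
    qed
    have qd: "qS \<bullet> d > 0"
    proof -
      have "qS \<bullet> d = d \<bullet> d + (A *\<^sub>v w) \<bullet> d" unfolding qSd using add_scalar_prod_distrib[OF dc Awc dc] by simp
      also have "(A *\<^sub>v w) \<bullet> d = d \<bullet> (A *\<^sub>v w)" using comm_scalar_prod[OF Awc dc] .
      also have "\<dots> = (transpose_mat A *\<^sub>v d) \<bullet> w" using transpose_vec_mult_scalar[OF Ac wc dc] by simp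
      also have "\<dots> = 0" using Atd wc by simp
      finally show ?thesis using self_scalar_pos[OF dc dnz] by simp
    qed
    define D where "D = E *\<^sub>v d"
    have Dc: "D \<in> carrier_vec m" using D_def Ec dc by auto
    have Di: "\<And>i. i < m \<Longrightarrow> D $ i = (if i \<in> S then d $ card {a\<in>S. a<i} else 0)"
      using E_mult[OF Sm dc] D_def E_def by simp
    define e where "e = transpose_mat Phi *\<^sub>v D"
    have eJ: "\<And>j. j \<in> J \<Longrightarrow> e $ j = 0"
    proof -
      fix j assume jJ: "j \<in> J"
      have jn: "j < n" using jJ Jn by auto
      define k where "k = card {a\<in>J. a<j}"
      have k: "k < card J" using card_idx_less[OF finJ jJ] k_def by simp
      have pk: "pick J k = j" using pick_card_in_set[OF jJ] k_def by simp
      have "e $ j = (\<Sum>l<card S. Phi $$ (pick S l, j) * d $ l)" using PE[OF dc jn] e_def D_def by simp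
      also have "\<dots> = (transpose_mat A *\<^sub>v d) $ k" using ATidx[OF dc k] pk by simp
      also have "\<dots> = 0" using Atd k by simp
      finally show "e $ j = 0" .
    qed
    have ce: "\<And>j. j < n \<Longrightarrow> j \<notin> J \<Longrightarrow> \<bar>c $ j\<bar> < 1" using p1b J_def c_def by fastforce
    have ev1: "\<forall>\<^sub>F t in at_right (0::real). 0 < t" by (simp add: eventually_at_right_less)
    have ev2: "\<forall>\<^sub>F t in at_right (0::real). \<forall>i\<in>S. t * \<bar>D $ i\<bar> < \<bar>p1 $ i\<bar>"
      using finS by (intro eventually_ball_finite ballI ev_small) (use p1nz in auto)
    have ev3: "\<forall>\<^sub>F t in at_right (0::real). \<forall>j\<in>{j. j<n \<and> j \<notin> J}. t * \<bar>e $ j\<bar> < 1 - \<bar>c $ j\<bar>"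
      by (intro eventually_ball_finite ballI ev_small) (use ce in auto)
    from eventually_happens[OF eventually_conj[OF ev1 eventually_conj[OF ev2 ev3]]]
    obtain t where t0: "0 < t" and tS: "\<forall>i\<in>S. t * \<bar>D $ i\<bar> < \<bar>p1 $ i\<bar>"
      and tJ: "\<forall>j\<in>{j. j<n \<and> j \<notin> J}. t * \<bar>e $ j\<bar> < 1 - \<bar>c $ j\<bar>"
      using trivial_limit_at_right_real by blast
    define p where "p = vec m (\<lambda>i. p1 $ i - t * D $ i)"
    have pc: "p \<in> carrier_vec m" using p_def by simp
    have Pp: "\<And>j. j < n \<Longrightarrow> (transpose_mat Phi *\<^sub>v p) $ j = c $ j - t * e $ j"
    proof -
      fix j assume j: "j < n"
      have "(transpose_mat Phi *\<^sub>v p) $ j = (\<Sum>i<m. Phi $$ (i,j) * p $ i)" using transp_mult_index[OF Phi pc j] .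
      also have "\<dots> = (\<Sum>i<m. Phi $$ (i,j) * p1 $ i - t * (Phi $$ (i,j) * D $ i))"
        unfolding p_def by (intro sum.cong refl) (simp add: algebra_simps)
      also have "\<dots> = (\<Sum>i<m. Phi $$ (i,j) * p1 $ i) - t * (\<Sum>i<m. Phi $$ (i,j) * D $ i)"
        by (simp only: sum_subtractf sum_distrib_left)
      also have "\<dots> = c $ j - t * e $ j"
        using transp_mult_index[OF Phi p1c j] transp_mult_index[OF Phi Dc j] c_def e_def by simp
      finally show "(transpose_mat Phi *\<^sub>v p) $ j = c $ j - t * e $ j" .
    qed
    have pd: "p \<in> dual_set Phi x0"
    proof -
      have Xn: "supp_vec x0 \<subseteq> {..<n}" using x0 by (auto simp: supp_vec_def)
      have cX: "card {j. j < n \<and> j \<in> supp_vec x0} = card (supp_vec x0)" using card_lt_sub[OF Xn] by simp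
      have sv: "subvec (transpose_mat Phi *\<^sub>v p) (supp_vec x0) = subvec c (supp_vec x0)"
        unfolding subvec_def
      proof (intro eq_vecI)
        show "dim_vec (vec (card {i. i < dim_vec (transpose_mat Phi *\<^sub>v p) \<and> i \<in> supp_vec x0})
            (\<lambda>k. (transpose_mat Phi *\<^sub>v p) $ pick (supp_vec x0) k)) =
          dim_vec (vec (card {i. i < dim_vec c \<and> i \<in> supp_vec x0}) (\<lambda>k. c $ pick (supp_vec x0) k))"
          using cc dPhi by simp
        fix k assume "k < dim_vec (vec (card {i. i < dim_vec c \<and> i \<in> supp_vec x0}) (\<lambda>k. c $ pick (supp_vec x0) k))"
        then have k: "k < card (supp_vec x0)" using cc cX by simp
        have pk: "pick (supp_vec x0) k \<in> J" using pick_in_set[of k "supp_vec x0"] k X by blast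
        have pkn: "pick (supp_vec x0) k < n" using pk Jn by auto
        show "vec (card {i. i < dim_vec (transpose_mat Phi *\<^sub>v p) \<and> i \<in> supp_vec x0})
            (\<lambda>k. (transpose_mat Phi *\<^sub>v p) $ pick (supp_vec x0) k) $ k =
          vec (card {i. i < dim_vec c \<and> i \<in> supp_vec x0}) (\<lambda>k. c $ pick (supp_vec x0) k) $ k"
          using k cc cX dPhi Pp[OF pkn] eJ[OF pk] by simp
      qed
      have bd: "\<forall>j<n. \<bar>(transpose_mat Phi *\<^sub>v p) $ j\<bar> \<le> 1"
      proof (intro allI impI)
        fix j assume j: "j < n"
        show "\<bar>(transpose_mat Phi *\<^sub>v p) $ j\<bar> \<le> 1"
        proof (cases "j \<in> J")
          case True then show ?thesis using Pp[OF j] eJ p1b j c_def by simp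
        next
          case False
          then have "t * \<bar>e $ j\<bar> < 1 - \<bar>c $ j\<bar>" using tJ j by auto
          moreover have "\<bar>t * e $ j\<bar> = t * \<bar>e $ j\<bar>" using t0 by (simp add: abs_mult)
          ultimately show ?thesis using Pp[OF j] by (smt (verit) abs_triangle_ineq4)
        qed
      qed
      show ?thesis unfolding dual_set_def using pc dPhi sv p1e bd c_def by simp
    qed
    have l1p: "l1_norm p = l1_norm p1 - t * (qS \<bullet> d)"
    proof -
      have "l1_norm p = (\<Sum>i<m. \<bar>p $ i\<bar>)" unfolding l1_norm_def using pc by simp
      also have "\<dots> = (\<Sum>i<m. \<bar>p1 $ i\<bar> - t * (sgn (p1 $ i) * D $ i))"
      proof (intro sum.cong refl)
        fix i assume "i \<in> {..<m}"
        then have i: "i < m" by simp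
        show "\<bar>p $ i\<bar> = \<bar>p1 $ i\<bar> - t * (sgn (p1 $ i) * D $ i)"
        proof (cases "i \<in> S")
          case True
          have "\<bar>t * D $ i\<bar> < \<bar>p1 $ i\<bar>" using tS True t0 by (simp add: abs_mult)
          then show ?thesis using abs_pert[of "t * D $ i" "p1 $ i"] i p_def by (simp add: algebra_simps)
        next
          case False then show ?thesis using p1z[OF i] Di[OF i] i p_def by simp
        qed
      qed
      also have "\<dots> = (\<Sum>i<m. \<bar>p1 $ i\<bar>) - t * (\<Sum>i<m. sgn (p1 $ i) * D $ i)"
        by (simp add: sum_subtractf sum_distrib_left)
      also have "(\<Sum>i<m. sgn (p1 $ i) * D $ i) = (\<Sum>l<card S. sgn (p1 $ pick S l) * d $ l)"
        unfolding D_def E_def by (rule sum_E[OF Sm dc])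
      also have "\<dots> = qS \<bullet> d" unfolding scalar_prod_def using dc qSi
        by (auto simp: atLeast0LessThan intro!: sum.cong)
      also have "(\<Sum>i<m. \<bar>p1 $ i\<bar>) = l1_norm p1" unfolding l1_norm_def using p1c by simp
      finally show ?thesis .
    qed
    have "l1_norm p < l1_norm p1" using l1p t0 qd by simp
    then show False using p1_min pd by fastforce
  qed
  have eq: "card S = card J" using JleS SleJ by simp
  have Ac': "A \<in> carrier_mat (card S) (card S)" using Ac eq by simp
  have rkS: "vec_space.rank (card S) A = card S" using rkA eq by simp
  have "det A \<noteq> 0" using vec_space.det_rank_iff[OF Ac'] rkS by simp
  from det_non_zero_imp_unit[OF Ac' this, of "()"] obtain Ai where Ai: "Ai \<in> carrier_mat (card S) (card S)" "Ai * A = 1\<^sub>m (card S)" "A * Ai = 1\<^sub>m (card S)"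
    unfolding Units_def ring_mat_def by auto
  have invA: "invertible_mat A" unfolding invertible_mat_def inverts_mat_def square_mat.simps
    by (intro conjI exI[of _ Ai]) (use carrier_matD[OF Ac'] carrier_matD[OF Ai(1)] Ai in auto)
  have PJc: "submatrix Phi UNIV J \<in> carrier_mat m (card J)" using dPhi cardJ by (auto simp: dim_submatrix)
  have PJidx: "\<And>i k. i < m \<Longrightarrow> k < card J \<Longrightarrow> submatrix Phi UNIV J $$ (i,k) = Phi $$ (i, pick J k)"
    using submatrix_index[of _ Phi UNIV _ J] dPhi cardJ by (auto simp: pick_UNIV)
  have dP: "coord_proj m S \<in> carrier_mat m m" by (simp add: coord_proj_def)
  have meq: "coord_proj m S * submatrix Phi UNIV J = E * A"
  proof (rule eq_matI)
    show "dim_row (coord_proj m S * submatrix Phi UNIV J) = dim_row (E * A)"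
      using carrier_matD[OF dP] carrier_matD[OF Ec] by simp
    show "dim_col (coord_proj m S * submatrix Phi UNIV J) = dim_col (E * A)"
      using carrier_matD[OF PJc] dA by simp
    fix i k assume "i < dim_row (E * A)" "k < dim_col (E * A)"
    then have i: "i < m" and k: "k < card J" using carrier_matD[OF Ec] dA by simp_all
    have colPJ: "col (submatrix Phi UNIV J) k \<in> carrier_vec m" using col_dim[of "submatrix Phi UNIV J" k] carrier_matD[OF PJc] by simp
    have colA: "col A k \<in> carrier_vec (card S)" using col_dim[of A k] dA by simp
    have "(coord_proj m S * submatrix Phi UNIV J) $$ (i,k) = (coord_proj m S *\<^sub>v col (submatrix Phi UNIV J) k) $ i"
      using index_mult_mat(1)[of i "coord_proj m S" k "submatrix Phi UNIV J"]
        index_mult_mat_vec[of i "coord_proj m S" "col (submatrix Phi UNIV J) k"]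
        carrier_matD[OF dP] carrier_matD[OF PJc] i k by simp
    also have "\<dots> = (if i \<in> S then Phi $$ (i, pick J k) else 0)"
      unfolding P_mult[OF colPJ i] using PJidx[OF i k] i k carrier_matD[OF PJc] by simp
    also have "\<dots> = (E *\<^sub>v col A k) $ i"
    proof -
      have EcA: "(E *\<^sub>v col A k) $ i = (if i \<in> S then col A k $ card {a\<in>S. a<i} else 0)"
        unfolding E_def by (rule E_mult[OF Sm colA i])
      show ?thesis
      proof (cases "i \<in> S")
        case True
        have ci: "card {a\<in>S. a<i} < card S" using card_idx_less[OF finS True] .
        then show ?thesis using True pick_card_in_set[OF True] Aidx[OF ci k] Ac k EcA by simp
      qed (simp add: EcA)
    qed
    also have "\<dots> = (E * A) $$ (i,k)"
      using index_mult_mat(1)[of i E k A] index_mult_mat_vec[of i E "col A k"]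
        carrier_matD[OF Ec] dA i k by simp
    finally show "(coord_proj m S * submatrix Phi UNIV J) $$ (i,k) = (E * A) $$ (i,k)" .
  qed
  have ker: "mat_kernel (E * A) = {0\<^sub>v (card J)}"
  proof
    have z: "(E * A) *\<^sub>v 0\<^sub>v (card J) = 0\<^sub>v m"
      by (rule eq_vecI) (use carrier_matD[OF Ec] dA in \<open>auto simp: scalar_prod_def\<close>)
    show "{0\<^sub>v (card J)} \<subseteq> mat_kernel (E * A)" unfolding mat_kernel_def
      using z carrier_matD[OF Ec] dA by simp
    show "mat_kernel (E * A) \<subseteq> {0\<^sub>v (card J)}"
    proof
      fix v assume "v \<in> mat_kernel (E * A)"
      then have v: "v \<in> carrier_vec (card J)" and Ev: "(E * A) *\<^sub>v v = 0\<^sub>v m"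
        unfolding mat_kernel_def using Ec Ac by auto
      have vS: "v \<in> carrier_vec (card S)" using v eq by simp
      define u where "u = A *\<^sub>v v"
      have uc: "u \<in> carrier_vec (card S)" unfolding u_def carrier_vec_def using dA by simp
      have Eu: "E *\<^sub>v u = 0\<^sub>v m" using Ev Ec Ac v u_def by (metis assoc_mult_mat_vec)
      have u0: "u = 0\<^sub>v (card S)"
      proof (rule eq_vecI)
        show "dim_vec u = dim_vec (0\<^sub>v (card S))" using uc by simp
        fix l assume "l < dim_vec (0\<^sub>v (card S))"
        then have l: "l < card S" by simp
        have pl: "pick S l \<in> S" using pick_in_set l by blast
        have plm: "pick S l < m" using pl Sm by auto
        have "(E *\<^sub>v u) $ pick S l = u $ l"
          unfolding E_def E_mult[OF Sm uc plm] using pl card_pick l by simp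
        then show "u $ l = 0\<^sub>v (card S) $ l" using Eu plm l by simp
      qed
      have "v = (Ai * A) *\<^sub>v v" using Ai vS by simp
      also have "\<dots> = Ai *\<^sub>v u" using Ai Ac' vS u_def by (metis assoc_mult_mat_vec)
      also have "\<dots> = 0\<^sub>v (card J)" unfolding u0
        by (rule eq_vecI) (use carrier_matD[OF Ai(1)] eq in \<open>auto simp: scalar_prod_def\<close>)
      finally show "v \<in> {0\<^sub>v (card J)}" by simp
    qed
  qed
  show ?thesis using eq invA meq ker unfolding A_def E_def by simp
qed

end
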